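(* Using the notation below, the maximum of $s_XT+s_A\min\{T,R\}+s_B\min\{T,S\}$ over all non-negative reals $x_{\kappa\kappa_A\kappa_B}$, $(\kappa,\kappa_A,\kappa_B)\in\{A,B,X\}^3$, summing to one is equal to the maximum of $s_XT+s_AR+s_BS$ over all non-negative reals $x_{\kappa\kappa_A\kappa_B}$ summing to one that additionally satisfy $R\le T$ and $S\le T$.
   Context: For triples $(\kappa,\kappa_A,\kappa_B),(\lambda,\lambda_A,\lambda_B)\in\{A,B,X\}^3$ write $\kappa\kappa_A\kappa_B\to\lambda\lambda_A\lambda_B$ if each of the pairs $(\kappa,\lambda)$, $(\kappa_A,\lambda_A)$, $(\kappa_B,\lambda_B)$ is one of $(A,B),(A,X),(B,X),(X,A),(X,B),(X,X)$, and moreover $(\kappa_B,\lambda_A)\neq(A,B)$. Given reals $x_{\kappa\kappa_A\kappa_B}$, let $T=\sum_{A\kappa_A\kappa_B\to B\lambda_A\lambda_B}x_{A\kappa_A\kappa_B}x_{B\lambda_A\lambda_B}$ (sum over all $\kappa_A,\kappa_B,\lambda_A,\lambda_B$ with $A\kappa_A\kappa_B\to B\lambda_A\lambda_B$), $R=\sum_{\kappa A\kappa_B\to\lambda B\lambda_B}x_{\kappa A\kappa_B}x_{\lambda B\lambda_B}$, $S=\sum_{\kappa\kappa_A A\to\lambda\lambda_A B}x_{\kappa\kappa_A A}x_{\lambda\lambda_A B}$, and $s_\mu=\sum_{\kappa_A,\kappa_B}x_{\mu\kappa_A\kappa_B}$ for $\mu\in\{A,B,X\}$. *)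

theory Defs
  imports Main HOL.Real
begin

datatype letter = A | B | X

definition letters :: "letter set" where
  "letters = {A, B, X}"

definition step :: "letter \<Rightarrow> letter \<Rightarrow> bool" where
  "step k l \<longleftrightarrow> (k, l) \<in> {(A,B), (A,X), (B,X), (X,A), (X,B), (X,X)}"

definition arrow :: "letter \<times> letter \<times> letter \<Rightarrow> letter \<times> letter \<times> letter \<Rightarrow> bool" where
  "arrow t u = (case t of (k, kA, kB) \<Rightarrow> case u of (l, lA, lB) \<Rightarrow>
      step k l \<and> step kA lA \<and> step kB lB \<and> (kB, lA) \<noteq> (A, B))"

type_synonym weights = "letter \<times> letter \<times> letter \<Rightarrow> real"

definition T_val :: "weights \<Rightarrow> real" where
  "T_val x = (\<Sum>kA\<in>letters. \<Sum>kB\<in>letters. \<Sum>lA\<in>letters. \<Sum>lB\<in>letters.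
      if arrow (A, kA, kB) (B, lA, lB) then x (A, kA, kB) * x (B, lA, lB) else 0)"

definition R_val :: "weights \<Rightarrow> real" where
  "R_val x = (\<Sum>k\<in>letters. \<Sum>kB\<in>letters. \<Sum>l\<in>letters. \<Sum>lB\<in>letters.
      if arrow (k, A, kB) (l, B, lB) then x (k, A, kB) * x (l, B, lB) else 0)"

definition S_val :: "weights \<Rightarrow> real" where
  "S_val x = (\<Sum>k\<in>letters. \<Sum>kA\<in>letters. \<Sum>l\<in>letters. \<Sum>lA\<in>letters.
      if arrow (k, kA, A) (l, lA, B) then x (k, kA, A) * x (l, lA, B) else 0)"

definition s_val :: "weights \<Rightarrow> letter \<Rightarrow> real" where
  "s_val x m = (\<Sum>kA\<in>letters. \<Sum>kB\<in>letters. x (m, kA, kB))"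

definition simplex :: "weights set" where
  "simplex = {x. (\<forall>t. 0 \<le> x t) \<and>
      (\<Sum>k\<in>letters. \<Sum>kA\<in>letters. \<Sum>kB\<in>letters. x (k, kA, kB)) = 1}"

definition F_obj :: "weights \<Rightarrow> real" where
  "F_obj x = s_val x X * T_val x + s_val x A * min (T_val x) (R_val x)
             + s_val x B * min (T_val x) (S_val x)"

definition G_obj :: "weights \<Rightarrow> real" where
  "G_obj x = s_val x X * T_val x + s_val x A * R_val x + s_val x B * S_val x"

definition is_max_on :: "(weights \<Rightarrow> real) \<Rightarrow> weights set \<Rightarrow> real \<Rightarrow> bool" where
  "is_max_on f D M \<longleftrightarrow> (\<exists>x\<in>D. f x = M) \<and> (\<forall>x\<in>D. f x \<le> M)"

end

theory Submission imports Defs "HOL-Analysis.Function_Topology" begin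

lemma UNIV_letter: "(UNIV::letter set) = {A,B,X}"
  using letter.exhaust by auto

instance letter :: finite
  by standard (simp add: UNIV_letter)

lemma letters_UNIV: "letters = UNIV" by (simp add: letters_def UNIV_letter)

lemma sum_tri: "(\<Sum>t\<in>UNIV. f t) = (\<Sum>k\<in>letters. \<Sum>i\<in>letters. \<Sum>j\<in>letters. f (k,i,j))"
  unfolding letters_UNIV
  by (simp add: sum.cartesian_product flip: UNIV_Times_UNIV)

type_synonym tri = "letter\<times>letter\<times>letter"

definition Q :: "(tri \<Rightarrow> tri \<Rightarrow> bool) \<Rightarrow> weights \<Rightarrow> real" where
  "Q P x = (\<Sum>t\<in>UNIV. \<Sum>u\<in>UNIV. of_bool (P t u) * x t * x u)"

definition PT where "PT t u = (fst t = A \<and> fst u = B \<and> arrow t u)"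
definition PR where "PR t u = (fst (snd t) = A \<and> fst (snd u) = B \<and> arrow t u)"
definition PS where "PS t u = (snd (snd t) = A \<and> snd (snd u) = B \<and> arrow t u)"

lemma T_Q: "T_val x = Q PT x"
  unfolding Q_def T_val_def sum_tri
  by (simp add: letters_def PT_def arrow_def step_def)

lemma R_Q: "R_val x = Q PR x"
  unfolding Q_def R_val_def sum_tri
  by (simp add: letters_def PR_def arrow_def step_def)

lemma S_Q: "S_val x = Q PS x"
  unfolding Q_def S_val_def sum_tri
  by (simp add: letters_def PS_def arrow_def step_def)

lemma s_sum: "s_val x m = (\<Sum>t\<in>UNIV. of_bool (fst t = m) * x t)"
  unfolding s_val_def sum_tri
  by (cases m) (simp_all add: letters_def)

lemma simplex_alt: "simplex = {x. (\<forall>t. 0 \<le> x t) \<and> (\<Sum>t\<in>UNIV. x t) = 1}"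
  unfolding simplex_def sum_tri ..

definition push :: "(tri \<Rightarrow> tri \<Rightarrow> real) \<Rightarrow> weights \<Rightarrow> weights" where
  "push K x = (\<lambda>t'. \<Sum>t\<in>UNIV. K t t' * x t)"

lemma Q_push: "Q P (push K x) = (\<Sum>t\<in>UNIV. \<Sum>u\<in>UNIV. x t * x u *
     (\<Sum>t'\<in>UNIV. \<Sum>u'\<in>UNIV. K t t' * K u u' * of_bool (P t' u')))"
proof -
  define f where "f t' u' t u = x t * x u * (K t t' * K u u' * of_bool (P t' u'))" for t' u' t u
  have "Q P (push K x) = (\<Sum>t'\<in>UNIV. \<Sum>u'\<in>UNIV. \<Sum>t\<in>UNIV. \<Sum>u\<in>UNIV. f t' u' t u)"
  proof -
    have "of_bool (P t' u') * push K x t' * push K x u' = (\<Sum>t\<in>UNIV. \<Sum>u\<in>UNIV. f t' u' t u)" for t' u'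
    proof -
      have "push K x t' * push K x u' = (\<Sum>t\<in>UNIV. \<Sum>u\<in>UNIV. (K t t' * x t) * (K u u' * x u))"
        unfolding push_def by (rule sum_product)
      then show ?thesis unfolding f_def mult.assoc
        by (simp add: sum_distrib_left mult_ac)
    qed
    then show ?thesis unfolding Q_def by simp
  qed
  also have "\<dots> = (\<Sum>t'\<in>UNIV. \<Sum>t\<in>UNIV. \<Sum>u'\<in>UNIV. \<Sum>u\<in>UNIV. f t' u' t u)"
    by (rule sum.cong[OF refl], rule sum.swap)
  also have "\<dots> = (\<Sum>t\<in>UNIV. \<Sum>t'\<in>UNIV. \<Sum>u'\<in>UNIV. \<Sum>u\<in>UNIV. f t' u' t u)"
    by (rule sum.swap)
  also have "\<dots> = (\<Sum>t\<in>UNIV. \<Sum>t'\<in>UNIV. \<Sum>u\<in>UNIV. \<Sum>u'\<in>UNIV. f t' u' t u)"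
    by (rule sum.cong[OF refl], rule sum.cong[OF refl], rule sum.swap)
  also have "\<dots> = (\<Sum>t\<in>UNIV. \<Sum>u\<in>UNIV. \<Sum>t'\<in>UNIV. \<Sum>u'\<in>UNIV. f t' u' t u)"
    by (rule sum.cong[OF refl], rule sum.swap)
  finally show ?thesis by (simp only: f_def sum_distrib_left)
qed

lemma Q_mono:
  assumes K0: "\<And>t t'. 0 \<le> K t t'" and K1: "\<And>t. (\<Sum>t'\<in>UNIV. K t t') = 1"
    and pres: "\<And>t u t' u'. P t u \<Longrightarrow> K t t' \<noteq> 0 \<Longrightarrow> K u u' \<noteq> 0 \<Longrightarrow> P t' u'"
    and x0: "\<And>t. 0 \<le> x t"
  shows "Q P x \<le> Q P (push K x)"
proof -
  have ineq: "of_bool (P t u) \<le> (\<Sum>t'\<in>UNIV. \<Sum>u'\<in>UNIV. K t t' * K u u' * of_bool (P t' u'))" for t u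
  proof (cases "P t u")
    case True
    have "(\<Sum>t'\<in>UNIV. \<Sum>u'\<in>UNIV. K t t' * K u u' * of_bool (P t' u'))
        = (\<Sum>t'\<in>UNIV. \<Sum>u'\<in>UNIV. K t t' * K u u')"
    proof (intro sum.cong refl)
      fix t' u'
      show "K t t' * K u u' * of_bool (P t' u') = K t t' * K u u'"
        using pres[OF True, of t' u'] by (cases "P t' u'") auto
    qed
    also have "\<dots> = 1" by (simp add: sum_distrib_left[symmetric] K1)
    finally show ?thesis using True by (simp only: of_bool_eq(2))
  next
    case False
    then show ?thesis using K0 by (simp add: sum_nonneg)
  qed
  have "of_bool (P t u) * x t * x u \<le>
     x t * x u * (\<Sum>t'\<in>UNIV. \<Sum>u'\<in>UNIV. K t t' * K u u' * of_bool (P t' u'))" for t u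
  proof -
    have "0 \<le> x t * x u" using x0 by simp
    from mult_left_mono[OF ineq[of t u] this] show ?thesis by (simp only: mult_ac)
  qed
  then show ?thesis unfolding Q_push unfolding Q_def by (intro sum_mono)
qed

lemma Q_scale:
  assumes "\<And>t u. (\<Sum>t'\<in>UNIV. \<Sum>u'\<in>UNIV. K t t' * K u u' * of_bool (P t' u')) = c * of_bool (P t u)"
  shows "Q P (push K x) = c * Q P x"
  unfolding Q_push assms by (simp add: Q_def sum_distrib_left mult_ac)

lemma push_lin:
  assumes "\<And>s. (\<Sum>t\<in>UNIV. K s t * g t) = g s"
  shows "(\<Sum>t\<in>UNIV. g t * push K x t) = (\<Sum>t\<in>UNIV. g t * x t)"
proof -
  have "(\<Sum>t\<in>UNIV. g t * push K x t) = (\<Sum>t\<in>UNIV. \<Sum>s\<in>UNIV. x s * (K s t * g t))"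
    unfolding push_def by (simp add: sum_distrib_left mult_ac)
  also have "\<dots> = (\<Sum>s\<in>UNIV. x s * (\<Sum>t\<in>UNIV. K s t * g t))"
    by (subst sum.swap) (simp add: sum_distrib_left)
  finally show ?thesis using assms by (simp add: mult_ac)
qed


definition w :: "real \<Rightarrow> letter \<Rightarrow> letter \<Rightarrow> real" where
  "w a i i' = (if i = A then (if i' = A then 1 - a else if i' = X then a else 0) else of_bool (i' = i))"

definition K2 :: "real \<Rightarrow> tri \<Rightarrow> tri \<Rightarrow> real" where
  "K2 a t t' = of_bool (fst t = fst t' \<and> snd (snd t) = snd (snd t')) * w a (fst (snd t)) (fst (snd t'))"

definition K3 :: "real \<Rightarrow> tri \<Rightarrow> tri \<Rightarrow> real" where
  "K3 a t t' = of_bool (fst t = fst t' \<and> fst (snd t) = fst (snd t')) * w a (snd (snd t)) (snd (snd t'))"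

lemma sum_letter: "(\<Sum>i\<in>UNIV. f i) = f A + f B + (f X :: real)"
  by (simp add: UNIV_letter)

lemma sumK2_snd: "(\<Sum>t'\<in>UNIV. K2 a t t' * f t') = (\<Sum>i'\<in>UNIV. w a (fst (snd t)) i' * f (fst t, i', snd (snd t)))"
proof -
  obtain k i j where t: "t = (k,i,j)" by (cases t) auto
  show ?thesis unfolding sum_tri t
    by (cases k; cases j) (simp_all add: letters_def K2_def sum_letter)
qed

lemma sumK2_fst: "(\<Sum>t\<in>UNIV. K2 a t t' * f t) = (\<Sum>i\<in>UNIV. w a i (fst (snd t')) * f (fst t', i, snd (snd t')))"
proof -
  obtain k i j where t: "t' = (k,i,j)" by (cases t') auto
  show ?thesis unfolding sum_tri t
    by (cases k; cases j) (simp_all add: letters_def K2_def sum_letter)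
qed

lemma sumK3_snd: "(\<Sum>t'\<in>UNIV. K3 a t t' * f t') = (\<Sum>j'\<in>UNIV. w a (snd (snd t)) j' * f (fst t, fst (snd t), j'))"
proof -
  obtain k i j where t: "t = (k,i,j)" by (cases t) auto
  show ?thesis unfolding sum_tri t
    by (cases k; cases i) (simp_all add: letters_def K3_def sum_letter)
qed

lemma sumK3_fst: "(\<Sum>t\<in>UNIV. K3 a t t' * f t) = (\<Sum>j\<in>UNIV. w a j (snd (snd t')) * f (fst t', fst (snd t'), j))"
proof -
  obtain k i j where t: "t' = (k,i,j)" by (cases t') auto
  show ?thesis unfolding sum_tri t
    by (cases k; cases i) (simp_all add: letters_def K3_def sum_letter)
qed

lemma w_nonneg: "0 \<le> a \<Longrightarrow> a \<le> 1 \<Longrightarrow> 0 \<le> w a i i'"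
  by (simp add: w_def)

lemma w_row: "(\<Sum>i'\<in>UNIV. w a i i') = 1"
  by (cases i) (simp_all add: sum_letter w_def)

lemma w_nz: "w a i i' \<noteq> 0 \<Longrightarrow> i' = i \<or> (i = A \<and> i' = X)"
  by (cases i; cases i') (simp_all add: w_def)

lemma w_lin: "w a i i' = w 0 i i' + a * (w 1 i i' - w 0 i i')"
  by (cases i; cases i') (simp_all add: w_def)

lemma step_pres:
  assumes "step k l" "k' = k \<or> (k = A \<and> k' = X)" "l' = l \<or> (l = A \<and> l' = X)"
  shows "step k' l'"
  using assms unfolding step_def by (cases k; cases l; cases k'; cases l') auto

lemma arrow_pres:
  assumes "arrow (k,i,j) (l,p,q)"
    "i' = i \<or> (i = A \<and> i' = X)" "j' = j \<or> (j = A \<and> j' = X)"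
    "p' = p \<or> (p = A \<and> p' = X)" "q' = q \<or> (q = A \<and> q' = X)"
  shows "arrow (k,i',j') (l,p',q')"
proof -
  have a: "step k l" "step i p" "step j q" "(j, p) \<noteq> (A, B)"
    using assms(1) unfolding arrow_def by auto
  have "step i' p'" by (rule step_pres[OF a(2) assms(2) assms(4)])
  moreover have "step j' q'" by (rule step_pres[OF a(3) assms(3) assms(5)])
  moreover have "(j', p') \<noteq> (A, B)" using a(4) assms(3,4) by auto
  ultimately show ?thesis using a(1) unfolding arrow_def by simp
qed

lemma K2_nonneg: "0 \<le> a \<Longrightarrow> a \<le> 1 \<Longrightarrow> 0 \<le> K2 a t t'"
  by (simp add: K2_def w_nonneg)
lemma K3_nonneg: "0 \<le> a \<Longrightarrow> a \<le> 1 \<Longrightarrow> 0 \<le> K3 a t t'"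
  by (simp add: K3_def w_nonneg)

lemma K2_row: "(\<Sum>t'\<in>UNIV. K2 a t t') = 1"
  using sumK2_snd[of a t "\<lambda>_. 1"] by (simp add: w_row)
lemma K3_row: "(\<Sum>t'\<in>UNIV. K3 a t t') = 1"
  using sumK3_snd[of a t "\<lambda>_. 1"] by (simp add: w_row)

lemma K2_nz: "K2 a t t' \<noteq> 0 \<Longrightarrow> fst t' = fst t \<and> snd (snd t') = snd (snd t) \<and>
   (fst (snd t') = fst (snd t) \<or> (fst (snd t) = A \<and> fst (snd t') = X))"
  unfolding K2_def using w_nz by (auto split: if_splits)
lemma K3_nz: "K3 a t t' \<noteq> 0 \<Longrightarrow> fst t' = fst t \<and> fst (snd t') = fst (snd t) \<and>
   (snd (snd t') = snd (snd t) \<or> (snd (snd t) = A \<and> snd (snd t') = X))"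
  unfolding K3_def using w_nz by (auto split: if_splits)


lemma tri_split: obtains k i j where "t = (k,i,j)" by (cases t) auto

lemma pres_K2:
  assumes "K2 a t t' \<noteq> 0" "K2 a u u' \<noteq> 0" "arrow t u"
  shows "arrow t' u'"
proof -
  obtain k i j where t: "t = (k,i,j)" by (rule tri_split)
  obtain l p q where u: "u = (l,p,q)" by (rule tri_split)
  obtain k' i' j' where t': "t' = (k',i',j')" by (rule tri_split)
  obtain l' p' q' where u': "u' = (l',p',q')" by (rule tri_split)
  show ?thesis using K2_nz[OF assms(1)] K2_nz[OF assms(2)] assms(3) arrow_pres[of k i j l p q i' j' p' q']
    unfolding t u t' u' by auto
qed

lemma pres_K3:
  assumes "K3 a t t' \<noteq> 0" "K3 a u u' \<noteq> 0" "arrow t u"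
  shows "arrow t' u'"
proof -
  obtain k i j where t: "t = (k,i,j)" by (rule tri_split)
  obtain l p q where u: "u = (l,p,q)" by (rule tri_split)
  obtain k' i' j' where t': "t' = (k',i',j')" by (rule tri_split)
  obtain l' p' q' where u': "u' = (l',p',q')" by (rule tri_split)
  show ?thesis using K3_nz[OF assms(1)] K3_nz[OF assms(2)] assms(3) arrow_pres[of k i j l p q i' j' p' q']
    unfolding t u t' u' by auto
qed

lemma PT_K2: "PT t u \<Longrightarrow> K2 a t t' \<noteq> 0 \<Longrightarrow> K2 a u u' \<noteq> 0 \<Longrightarrow> PT t' u'"
  using pres_K2 K2_nz unfolding PT_def by metis
lemma PT_K3: "PT t u \<Longrightarrow> K3 a t t' \<noteq> 0 \<Longrightarrow> K3 a u u' \<noteq> 0 \<Longrightarrow> PT t' u'"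
  using pres_K3 K3_nz unfolding PT_def by metis
lemma PS_K2: "PS t u \<Longrightarrow> K2 a t t' \<noteq> 0 \<Longrightarrow> K2 a u u' \<noteq> 0 \<Longrightarrow> PS t' u'"
  using pres_K2 K2_nz unfolding PS_def by metis
lemma PR_K3: "PR t u \<Longrightarrow> K3 a t t' \<noteq> 0 \<Longrightarrow> K3 a u u' \<noteq> 0 \<Longrightarrow> PR t' u'"
  using pres_K3 K3_nz unfolding PR_def by metis

lemma double_sum: "(\<Sum>t'\<in>UNIV. \<Sum>u'\<in>UNIV. f t' * h u' * (g t' u'::real)) =
   (\<Sum>t'\<in>UNIV. f t' * (\<Sum>u'\<in>UNIV. h u' * g t' u'))"
  by (simp add: sum_distrib_left mult.assoc)

lemma PR_K2_scale: "(\<Sum>t'\<in>UNIV. \<Sum>u'\<in>UNIV. K2 a t t' * K2 a u u' * of_bool (PR t' u')) = (1 - a) * of_bool (PR t u)"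
proof -
  obtain k i j where t: "t = (k,i,j)" by (rule tri_split)
  obtain l p q where u: "u = (l,p,q)" by (rule tri_split)
  show ?thesis unfolding double_sum sumK2_snd unfolding t u
    by (cases i; cases p) (simp_all add: sum_letter PR_def w_def)
qed

lemma PS_K3_scale: "(\<Sum>t'\<in>UNIV. \<Sum>u'\<in>UNIV. K3 a t t' * K3 a u u' * of_bool (PS t' u')) = (1 - a) * of_bool (PS t u)"
proof -
  obtain k i j where t: "t = (k,i,j)" by (rule tri_split)
  obtain l p q where u: "u = (l,p,q)" by (rule tri_split)
  show ?thesis unfolding double_sum sumK3_snd unfolding t u
    by (cases j; cases q) (simp_all add: sum_letter PS_def w_def)
qed

lemma comm: "push (K2 a) (push (K3 b) x) = push (K3 b) (push (K2 a) x)"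
proof
  fix t' :: tri
  obtain k i' j' where t: "t' = (k,i',j')" by (rule tri_split)
  have "push (K2 a) (push (K3 b) x) t' = (\<Sum>i\<in>UNIV. \<Sum>j\<in>UNIV. w a i i' * w b j j' * x (k,i,j))"
    unfolding push_def sumK2_fst sumK3_fst t by (simp add: sum_distrib_left mult_ac)
  also have "\<dots> = (\<Sum>j\<in>UNIV. \<Sum>i\<in>UNIV. w a i i' * w b j j' * x (k,i,j))"
    by (rule sum.swap)
  also have "\<dots> = push (K3 b) (push (K2 a) x) t'"
    unfolding push_def sumK2_fst sumK3_fst t by (simp add: sum_distrib_left mult_ac)
  finally show "push (K2 a) (push (K3 b) x) t' = push (K3 b) (push (K2 a) x) t'" .
qed

lemma push_nonneg: "(\<And>t t'. 0 \<le> K t t') \<Longrightarrow> (\<And>t. 0 \<le> x t) \<Longrightarrow> 0 \<le> push K x t"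
  unfolding push_def by (intro sum_nonneg mult_nonneg_nonneg) auto

lemma K2_lin: "(\<Sum>t\<in>UNIV. K2 a s t * of_bool (fst t = m)) = of_bool (fst s = m)"
  unfolding sumK2_snd by (simp add: sum_distrib_right[symmetric] w_row)
lemma K3_lin: "(\<Sum>t\<in>UNIV. K3 a s t * of_bool (fst t = m)) = of_bool (fst s = m)"
  unfolding sumK3_snd by (simp add: sum_distrib_right[symmetric] w_row)

lemma s_K2: "s_val (push (K2 a) x) m = s_val x m"
  unfolding s_sum using push_lin[of "K2 a" "\<lambda>t. of_bool (fst t = m)" x] K2_lin by simp
lemma s_K3: "s_val (push (K3 a) x) m = s_val x m"
  unfolding s_sum using push_lin[of "K3 a" "\<lambda>t. of_bool (fst t = m)" x] K3_lin by simp

lemma tot_K2: "(\<Sum>t\<in>UNIV. push (K2 a) x t) = (\<Sum>t\<in>UNIV. x t)"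
  using push_lin[of "K2 a" "\<lambda>t. 1" x] K2_row by simp
lemma tot_K3: "(\<Sum>t\<in>UNIV. push (K3 a) x t) = (\<Sum>t\<in>UNIV. x t)"
  using push_lin[of "K3 a" "\<lambda>t. 1" x] K3_row by simp


lemma Q_nonneg: "(\<And>t. 0 \<le> x t) \<Longrightarrow> 0 \<le> Q P x"
  unfolding Q_def by (intro sum_nonneg mult_nonneg_nonneg) auto

lemma cont_K2 [continuous_intros]: "continuous_on S (\<lambda>b. K2 b s t)"
  unfolding K2_def by (subst w_lin) (intro continuous_intros)
lemma cont_K3 [continuous_intros]: "continuous_on S (\<lambda>b. K3 b s t)"
  unfolding K3_def by (subst w_lin) (intro continuous_intros)

lemma cont_QK2: "continuous_on S (\<lambda>b. Q P (push (K2 b) x))"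
  unfolding Q_def push_def by (intro continuous_intros)
lemma cont_QK3: "continuous_on S (\<lambda>b. Q P (push (K3 b) x))"
  unfolding Q_def push_def by (intro continuous_intros)

lemma alg_min:
  fixes T r :: real
  assumes "0 < T" "0 \<le> r"
  shows "(1 - max 0 ((r - T) / max r T)) * r = min r T"
proof (cases "r \<le> T")
  case True
  then have "(r - T) / max r T \<le> 0" using assms by (simp add: divide_nonpos_pos)
  then show ?thesis using True by simp
next
  case False
  then have m: "max r T = r" by simp
  have "0 \<le> (r - T) / r" using False assms by simp
  then have "(1 - max 0 ((r - T) / max r T)) * r = r - (r - T)" using False assms
    by (simp add: m field_simps)
  then show ?thesis using False by simp
qed

lemma alg_range:
  fixes T r :: real
  assumes "0 < T"
  shows "0 \<le> max 0 ((r - T) / max r T) \<and> max 0 ((r - T) / max r T) \<le> 1"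
proof -
  have "(r - T) / max r T \<le> 1" using assms by (auto simp: divide_le_eq_1 max_def)
  then show ?thesis by simp
qed

definition Cset :: "weights set" where
  "Cset = {x \<in> simplex. R_val x \<le> T_val x \<and> S_val x \<le> T_val x}"

lemma reduce:
  assumes xs: "x \<in> simplex"
  shows "\<exists>y\<in>Cset. F_obj x \<le> G_obj y"
proof -
  have x0: "\<And>t. 0 \<le> x t" and x1: "(\<Sum>t\<in>UNIV. x t) = 1" using xs by (auto simp: simplex_alt)
  define y where "y a b = push (K2 a) (push (K3 b) x)" for a b
  define T0 where "T0 = T_val x"
  define \<rho> where "\<rho> b = Q PR (push (K3 b) x)" for b
  define \<sigma> where "\<sigma> a = Q PS (push (K2 a) x)" for a
  have K3x0: "0 \<le> push (K3 b) x t" if "0 \<le> b" "b \<le> 1" for b t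
    using push_nonneg[OF K3_nonneg[OF that] x0] .
  have K2x0: "0 \<le> push (K2 a) x t" if "0 \<le> a" "a \<le> 1" for a t
    using push_nonneg[OF K2_nonneg[OF that] x0] .
  have y0: "0 \<le> y a b t" if "0 \<le> a" "a \<le> 1" "0 \<le> b" "b \<le> 1" for a b t
    unfolding y_def using push_nonneg[OF K2_nonneg[OF that(1,2)] K3x0[OF that(3,4)]] .
  have ysimp: "y a b \<in> simplex" if "0 \<le> a" "a \<le> 1" "0 \<le> b" "b \<le> 1" for a b
    using y0[OF that] x1 unfolding simplex_alt y_def by (simp add: tot_K2 tot_K3)
  have ys: "s_val (y a b) m = s_val x m" for a b m
    unfolding y_def by (simp add: s_K2 s_K3)
  have yT: "T0 \<le> T_val (y a b)" if "0 \<le> a" "a \<le> 1" "0 \<le> b" "b \<le> 1" for a b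
  proof -
    have "Q PT x \<le> Q PT (push (K3 b) x)"
      by (rule Q_mono[OF K3_nonneg[OF that(3,4)] K3_row PT_K3 x0]) auto
    also have "\<dots> \<le> Q PT (push (K2 a) (push (K3 b) x))"
      by (rule Q_mono[OF K2_nonneg[OF that(1,2)] K2_row PT_K2 K3x0[OF that(3,4)]]) auto
    finally show ?thesis unfolding T0_def y_def T_Q .
  qed
  have yR: "R_val (y a b) = (1 - a) * \<rho> b" for a b
    unfolding R_Q y_def \<rho>_def by (rule Q_scale[OF PR_K2_scale])
  have yS: "S_val (y a b) = (1 - b) * \<sigma> a" for a b
    unfolding S_Q y_def \<sigma>_def comm by (rule Q_scale[OF PS_K3_scale])
  have \<rho>R: "R_val x \<le> \<rho> b" if "0 \<le> b" "b \<le> 1" for b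
    unfolding R_Q \<rho>_def by (rule Q_mono[OF K3_nonneg[OF that] K3_row PR_K3 x0]) auto
  have \<sigma>S: "S_val x \<le> \<sigma> a" if "0 \<le> a" "a \<le> 1" for a
    unfolding S_Q \<sigma>_def by (rule Q_mono[OF K2_nonneg[OF that] K2_row PS_K2 x0]) auto
  have R0: "0 \<le> R_val x" unfolding R_Q by (rule Q_nonneg[OF x0])
  have S0: "0 \<le> S_val x" unfolding S_Q by (rule Q_nonneg[OF x0])
  have T00: "0 \<le> T0" unfolding T0_def T_Q by (rule Q_nonneg[OF x0])
  have sx0: "0 \<le> s_val x m" for m unfolding s_val_def using x0 by (intro sum_nonneg) auto
  show ?thesis
  proof (cases "T0 = 0")
    case True
    have "y 1 1 \<in> Cset" unfolding Cset_def using ysimp[of 1 1] yR[of 1 1] yS[of 1 1] yT[of 1 1] T00 by simp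
    moreover have "F_obj x \<le> G_obj (y 1 1)"
    proof -
      have "F_obj x = 0" unfolding F_obj_def using True R0 S0 by (simp add: T0_def)
      moreover have "0 \<le> G_obj (y 1 1)" unfolding G_obj_def yR yS ys using yT[of 1 1] True sx0 by simp
      ultimately show ?thesis by simp
    qed
    ultimately show ?thesis by blast
  next
    case False
    then have Tpos: "0 < T0" using T00 by simp
    define \<alpha> where "\<alpha> b = max 0 ((\<rho> b - T0) / max (\<rho> b) T0)" for b
    define \<beta> where "\<beta> a = max 0 ((\<sigma> a - T0) / max (\<sigma> a) T0)" for a
    have \<alpha>r: "0 \<le> \<alpha> b \<and> \<alpha> b \<le> 1" for b unfolding \<alpha>_def using alg_range[OF Tpos] .
    have \<beta>r: "0 \<le> \<beta> b \<and> \<beta> b \<le> 1" for b unfolding \<beta>_def using alg_range[OF Tpos] .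
    have c\<alpha>: "continuous_on {0..1} \<alpha>"
      unfolding \<alpha>_def using Tpos
      by (intro continuous_intros cont_QK3[of _ PR x, folded \<rho>_def]) auto
    have c\<beta>: "continuous_on {0..1} \<beta>"
      unfolding \<beta>_def using Tpos
      by (intro continuous_intros cont_QK2[of _ PS x, folded \<sigma>_def]) auto
    have c\<alpha>\<beta>: "continuous_on {0..1} (\<lambda>a. \<alpha> (\<beta> a))"
      by (rule continuous_on_compose2[OF c\<alpha> c\<beta>]) (use \<beta>r in auto)
    have ch: "continuous_on {0..1} (\<lambda>a. a - \<alpha> (\<beta> a))"
      by (intro continuous_intros c\<alpha>\<beta>)
    obtain a where a: "0 \<le> a" "a \<le> 1" "a - \<alpha> (\<beta> a) = 0"
      using IVT'[of "\<lambda>a. a - \<alpha> (\<beta> a)" 0 0 1, OF _ _ _ ch] \<alpha>r by auto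
    define b where "b = \<beta> a"
    have b: "0 \<le> b" "b \<le> 1" using \<beta>r unfolding b_def by auto
    have ab: "a = \<alpha> b" using a(3) unfolding b_def by simp
    have \<rho>0: "0 \<le> \<rho> b" using R0 \<rho>R[OF b] by simp
    have \<sigma>0: "0 \<le> \<sigma> a" using S0 \<sigma>S[OF a(1,2)] by simp
    have Ry: "R_val (y a b) = min (\<rho> b) T0"
      unfolding yR ab \<alpha>_def by (rule alg_min[OF Tpos \<rho>0])
    have Sy: "S_val (y a b) = min (\<sigma> a) T0"
      unfolding yS b_def \<beta>_def by (rule alg_min[OF Tpos \<sigma>0])
    have Ty: "T0 \<le> T_val (y a b)" by (rule yT[OF a(1,2) b])
    have "y a b \<in> Cset" unfolding Cset_def using ysimp[OF a(1,2) b] Ry Sy Ty by auto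
    moreover have "F_obj x \<le> G_obj (y a b)"
    proof -
      have 1: "s_val x X * T0 \<le> s_val x X * T_val (y a b)"
        using Ty sx0 by (simp add: mult_left_mono)
      have 2: "s_val x A * min T0 (R_val x) \<le> s_val x A * R_val (y a b)"
        using Ry \<rho>R[OF b] sx0 by (intro mult_left_mono) auto
      have 3: "s_val x B * min T0 (S_val x) \<le> s_val x B * S_val (y a b)"
        using Sy \<sigma>S[OF a(1,2)] sx0 by (intro mult_left_mono) auto
      show ?thesis unfolding F_obj_def G_obj_def ys T0_def[symmetric] using 1 2 3 by linarith
    qed
    ultimately show ?thesis by blast
  qed
qed


lemma cont_eval [continuous_intros]: "continuous_on S (\<lambda>x::weights. x t)"
  by (rule continuous_on_subset[OF continuous_on_product_coordinates]) simp

lemma cont_Q: "continuous_on S (Q P)"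
  unfolding Q_def by (intro continuous_intros)

lemma cont_s: "continuous_on S (\<lambda>x. s_val x m)"
  unfolding s_sum by (intro continuous_intros)

lemma cont_F: "continuous_on S F_obj"
proof -
  have eq: "F_obj = (\<lambda>x. s_val x X * Q PT x + s_val x A * min (Q PT x) (Q PR x)
             + s_val x B * min (Q PT x) (Q PS x))"
    unfolding F_obj_def T_Q R_Q S_Q ..
  show ?thesis unfolding eq
    by (intro continuous_intros cont_s cont_Q)
qed

lemma compact_cube: "compact (PiE UNIV (\<lambda>_::tri. {0..1::real}))"
proof -
  have "compactin (product_topology (\<lambda>_::tri. euclidean) UNIV) (PiE UNIV (\<lambda>_::tri. {0..1::real}))"
    by (subst compactin_PiE) simp
  then show ?thesis unfolding euclidean_product_topology by simp
qed

lemma closed_simplex: "closed simplex"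
proof -
  have eq: "simplex = {x. \<forall>t. 0 \<le> x t} \<inter> {x. (\<Sum>t\<in>UNIV. x t) = 1}"
    unfolding simplex_alt by auto
  moreover have "closed {x::weights. \<forall>t. 0 \<le> x t}"
    by (intro closed_Collect_all closed_Collect_le continuous_intros)
  moreover have "closed {x::weights. (\<Sum>t\<in>UNIV. x t) = 1}"
    by (intro closed_Collect_eq continuous_intros)
  ultimately show ?thesis unfolding eq by (intro closed_Int)
qed

lemma simplex_sub: "simplex \<subseteq> PiE UNIV (\<lambda>_::tri. {0..1::real})"
proof
  fix x assume "x \<in> simplex"
  then have x0: "\<And>t. 0 \<le> x t" and x1: "(\<Sum>t\<in>UNIV. x t) = 1" by (auto simp: simplex_alt)
  have "x t \<le> 1" for t using member_le_sum[of t UNIV x] x0 x1 by simp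
  then show "x \<in> PiE UNIV (\<lambda>_::tri. {0..1::real})" using x0 by (simp add: PiE_UNIV_domain)
qed

lemma compact_simplex: "compact simplex"
proof -
  have "compact (PiE UNIV (\<lambda>_::tri. {0..1::real}) \<inter> simplex)"
    using compact_cube closed_simplex by (rule compact_Int_closed)
  then show ?thesis using simplex_sub by (simp add: Int_absorb1)
qed

lemma simplex_ne: "simplex \<noteq> {}"
proof -
  have "(\<lambda>t. of_bool (t = (A,A,A))) \<in> simplex"
    unfolding simplex_alt by simp
  then show ?thesis by blast
qed

theorem lemma6p2:
  shows "\<exists>M. is_max_on F_obj simplex M \<and>
             is_max_on G_obj {x \<in> simplex. R_val x \<le> T_val x \<and> S_val x \<le> T_val x} M"
proof -
  obtain x where xs: "x \<in> simplex" and xmax: "\<forall>y\<in>simplex. F_obj y \<le> F_obj x"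
    using continuous_attains_sup[OF compact_simplex simplex_ne cont_F] by blast
  obtain y where yC: "y \<in> Cset" and Fy: "F_obj x \<le> G_obj y" using reduce[OF xs] by blast
  have GF: "G_obj z = F_obj z" if "z \<in> Cset" for z
    using that unfolding Cset_def G_obj_def F_obj_def by (simp add: min_absorb2)
  have Gle: "G_obj z \<le> F_obj x" if "z \<in> Cset" for z
    using GF[OF that] xmax that unfolding Cset_def by auto
  have "G_obj y = F_obj x" using Fy Gle[OF yC] by simp
  then show ?thesis unfolding is_max_on_def Cset_def[symmetric]
    using xs xmax yC Gle by blast
qed

end
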